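(* Let $X$ be an irreducible homogeneous Markov chain on a finite state space $\overline{F}$ with transition matrix $r$ and unique stationary distribution $\eta=(\eta_j:j\in\overline{F})$, and let $\boldsymbol{\alpha}=(\alpha_j:j\in\overline{F})\in[0,1]^{\overline{F}}$ be non-zero. Let $X^{(\boldsymbol{\alpha})}$ be the Markov chain obtained from $X$ by randomized skipping with acceptance probabilities $\boldsymbol{\alpha}$, with transition matrix $r^{(\boldsymbol{\alpha})}=(I-rI_{(1-\boldsymbol{\alpha})})^{-1}rI_{\boldsymbol{\alpha}}$. Then $X^{(\boldsymbol{\alpha})}$ has the unique stationary distribution \[ \eta^{(\boldsymbol{\alpha})}=\big(C^{(\boldsymbol{\alpha})}\big)^{-1}(\eta_j\alpha_j:j\in\overline{F}),\qquad C^{(\boldsymbol{\alpha})}=\sum_{j\in\overline{F}}\eta_j\alpha_j, \] and $\eta^{(\boldsymbol{\alpha})}$ has support $\overline{F}\setminus B(\boldsymbol{\alpha})$, where $B(\boldsymbol{\alpha})=\{j\in\overline{F}:\alpha_j=0\}$.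
   Context: $I_{\boldsymbol{\alpha}}$ and $I_{(1-\boldsymbol{\alpha})}$ are the diagonal matrices indexed by $\overline{F}$ with diagonal entries $\alpha_j$, resp. $1-\alpha_j$; $I$ is the identity matrix. Randomized skipping: from current state $i$ a destination $j$ is proposed with probability $r(i,j)$ and accepted, independently of the past given $j$, with probability $\alpha_j$; if accepted the chain moves to $j$; if rejected, the walker makes an imaginary jump to $j$ taking no time and immediately proposes a new destination from row $j$ of $r$, which is again accepted with the corresponding acceptance probability, and so on until a proposal is accepted. *)

theory Defs
  imports "HOL-Analysis.Analysis"
begin

text \<open>Finite state space = finite type 'n; transition matrices are real^'n^'n,
  with r $ i $ j the probability of moving from i to j.\<close>

definition stochastic_matrix :: "real^'n^'n \<Rightarrow> bool" where
  "stochastic_matrix r \<longleftrightarrow>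
     (\<forall>i j. 0 \<le> r $ i $ j) \<and> (\<forall>i. (\<Sum>j\<in>UNIV. r $ i $ j) = 1)"

definition irreducible_chain :: "real^'n^'n \<Rightarrow> bool" where
  "irreducible_chain r \<longleftrightarrow> (\<forall>i j. (i, j) \<in> {(a, b). 0 < r $ a $ b}\<^sup>+)"

definition prob_vector :: "real^'n \<Rightarrow> bool" where
  "prob_vector p \<longleftrightarrow> (\<forall>j. 0 \<le> p $ j) \<and> (\<Sum>j\<in>UNIV. p $ j) = 1"

definition stationary_dist :: "real^'n^'n \<Rightarrow> real^'n \<Rightarrow> bool" where
  "stationary_dist r p \<longleftrightarrow> prob_vector p \<and> p v* r = p"

definition diag_mat :: "real^'n \<Rightarrow> real^'n^'n" where
  "diag_mat d = (\<chi> i j. if i = j then d $ i else 0)"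

definition skip_matrix :: "real^'n^'n \<Rightarrow> real^'n \<Rightarrow> real^'n^'n" where
  "skip_matrix r \<alpha> =
     matrix_inv (mat 1 - r ** diag_mat (\<chi> j. 1 - \<alpha> $ j)) ** r ** diag_mat \<alpha>"

end

theory Submission
  imports Defs
begin

lemma vd_comp: "(x v* diag_mat d) $ j = x$j * d$j"
  by (simp add: vector_matrix_mult_def diag_mat_def if_distrib cong: if_cong)

lemma dv_comp: "(diag_mat d *v x) $ i = d$i * x$i"
  by (simp add: matrix_vector_mult_def diag_mat_def if_distrib[where f="\<lambda>a. a * _"] cong: if_cong)

lemma dv_sum: "(\<Sum>j\<in>UNIV. diag_mat d $ i $ j * x $ j) = d$i * x$i"
  using dv_comp[of d x i] by (simp add: matrix_vector_mult_def)

lemma vm_comp: "(x v* r) $ j = (\<Sum>i\<in>UNIV. x$i * r$i$j)"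
  by (simp add: vector_matrix_mult_def)

lemma mv_comp: "(r *v x) $ i = (\<Sum>j\<in>UNIV. r$i$j * x$j)"
  by (simp add: matrix_vector_mult_def)

lemma eta_pos:
  fixes r :: "real^'n^'n"
  assumes st: "stochastic_matrix r" and irr: "irreducible_chain r"
    and sd: "stationary_dist r \<eta>"
  shows "0 < \<eta> $ j"
proof -
  have nn: "\<And>j. 0 \<le> \<eta> $ j" and s1: "(\<Sum>j\<in>UNIV. \<eta> $ j) = 1" and inv: "\<eta> v* r = \<eta>"
    using sd unfolding stationary_dist_def prob_vector_def by auto
  have rnn: "\<And>i j. 0 \<le> r$i$j" using st unfolding stochastic_matrix_def by auto
  have key: "0 < \<eta>$b" if "0 < \<eta>$a" "0 < r$a$b" for a b
  proof -
    have "\<eta>$a * r$a$b \<le> (\<Sum>i\<in>UNIV. \<eta>$i * r$i$b)"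
      by (rule member_le_sum) (auto intro: mult_nonneg_nonneg nn rnn)
    also have "\<dots> = \<eta>$b" using vm_comp[of \<eta> r b] inv by simp
    finally show ?thesis using that by (smt (verit) mult_pos_pos)
  qed
  obtain i where i: "0 < \<eta>$i"
  proof (rule ccontr)
    assume "\<not> thesis"
    then have "\<forall>i. \<eta>$i \<le> 0" using that by (meson not_le)
    then have "(\<Sum>j\<in>UNIV. \<eta> $ j) \<le> 0" by (simp add: sum_nonpos)
    with s1 show False by simp
  qed
  have "(i, j) \<in> {(a, b). 0 < r $ a $ b}\<^sup>+" using irr unfolding irreducible_chain_def by auto
  then show ?thesis
    by (induction rule: trancl_induct) (use i key in auto)
qed

lemma M_inv:
  fixes r :: "real^'n^'n" and \<alpha> :: "real^'n"
  assumes st: "stochastic_matrix r" and irr: "irreducible_chain r"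
    and a01: "\<forall>j. 0 \<le> \<alpha> $ j \<and> \<alpha> $ j \<le> 1" and an: "\<alpha> \<noteq> 0"
  shows "invertible (mat 1 - r ** diag_mat (\<chi> j. 1 - \<alpha> $ j))"
proof -
  let ?M = "mat 1 - r ** diag_mat (\<chi> j. 1 - \<alpha> $ j)"
  have rnn: "\<And>i j. 0 \<le> r$i$j" and rs: "\<And>i. (\<Sum>j\<in>UNIV. r$i$j) = 1"
    using st unfolding stochastic_matrix_def by auto
  have "\<forall>x. ?M *v x = 0 \<longrightarrow> x = 0"
  proof (intro allI impI)
    fix x assume Mx: "?M *v x = 0"
    have xe: "x$i = (\<Sum>j\<in>UNIV. r$i$j * ((1 - \<alpha>$j) * x$j))" for i
    proof -
      have "?M *v x = x - r *v (diag_mat (\<chi> j. 1 - \<alpha> $ j) *v x)"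
        by (simp add: matrix_vector_mult_diff_rdistrib matrix_vector_mul_assoc)
      then have "(x - r *v (diag_mat (\<chi> j. 1 - \<alpha> $ j) *v x)) $ i = 0" using Mx by simp
      then show ?thesis by (simp add: mv_comp dv_sum)
    qed
    define m where "m = Max (range (\<lambda>j. \<bar>x$j\<bar>))"
    have xm: "\<bar>x$j\<bar> \<le> m" for j unfolding m_def by (rule Max_ge) auto
    have "m \<in> range (\<lambda>j. \<bar>x$j\<bar>)" unfolding m_def by (rule Max_in) auto
    then obtain i0 where i0: "\<bar>x$i0\<bar> = m" by auto
    show "x = 0"
    proof (rule ccontr)
      assume "x \<noteq> 0"
      then obtain k where "x$k \<noteq> 0" by (auto simp: vec_eq_iff)
      then have mpos: "0 < m" using xm[of k] by auto
      have step: "\<bar>x$b\<bar> = m \<and> \<alpha>$b = 0" if a: "\<bar>x$a\<bar> = m" and ab: "0 < r$a$b" for a b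
      proof (rule ccontr)
        assume nb: "\<not> (\<bar>x$b\<bar> = m \<and> \<alpha>$b = 0)"
        have lt: "(1 - \<alpha>$b) * \<bar>x$b\<bar> < m"
        proof -
          have "0 \<le> \<alpha>$b" "\<alpha>$b \<le> 1" using a01 by auto
          moreover have "\<bar>x$b\<bar> \<le> m" by (rule xm)
          ultimately show ?thesis
          proof (cases "\<bar>x$b\<bar> = m")
            case True
            then have "0 < \<alpha>$b" using nb \<open>0 \<le> \<alpha>$b\<close> by auto
            then show ?thesis using True mpos by (simp add: algebra_simps)
          next
            case False
            then have "\<bar>x$b\<bar> < m" using xm[of b] by simp
            moreover have "(1 - \<alpha>$b) * \<bar>x$b\<bar> \<le> \<bar>x$b\<bar>"
              using \<open>0 \<le> \<alpha>$b\<close> \<open>\<alpha>$b \<le> 1\<close> by (simp add: mult_left_le_one_le)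
            ultimately show ?thesis by simp
          qed
        qed
        have "m = \<bar>\<Sum>j\<in>UNIV. r$a$j * ((1 - \<alpha>$j) * x$j)\<bar>" using xe[of a] a by simp
        also have "\<dots> \<le> (\<Sum>j\<in>UNIV. \<bar>r$a$j * ((1 - \<alpha>$j) * x$j)\<bar>)" by (rule sum_abs)
        also have "\<dots> < (\<Sum>j\<in>UNIV. r$a$j * m)"
        proof (rule sum_strict_mono_ex1)
          show "\<forall>j\<in>UNIV. \<bar>r$a$j * ((1 - \<alpha>$j) * x$j)\<bar> \<le> r$a$j * m"
          proof
            fix j
            have "0 \<le> 1 - \<alpha>$j" "1 - \<alpha>$j \<le> 1" using a01 by auto
            then have "(1 - \<alpha>$j) * \<bar>x$j\<bar> \<le> \<bar>x$j\<bar>"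
              by (simp add: mult_left_le_one_le)
            then have "(1 - \<alpha>$j) * \<bar>x$j\<bar> \<le> m" using xm[of j] by simp
            then show "\<bar>r$a$j * ((1 - \<alpha>$j) * x$j)\<bar> \<le> r$a$j * m"
              using rnn[of a j] \<open>0 \<le> 1 - \<alpha>$j\<close> mult_left_mono[of "(1 - \<alpha>$j) * \<bar>x$j\<bar>" m "r$a$j"]
              by (simp add: abs_mult)
          qed
          show "\<exists>j\<in>UNIV. \<bar>r$a$j * ((1 - \<alpha>$j) * x$j)\<bar> < r$a$j * m"
            apply (rule bexI[of _ b])
            using lt ab a01 mult_strict_left_mono[OF lt ab] by (simp_all add: abs_mult)
        qed simp
        also have "\<dots> = m" by (simp add: sum_distrib_right[symmetric] rs)
        finally show False by simp
      qed
      have "\<alpha>$j = 0" for j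
      proof -
        have "(i0, j) \<in> {(a, b). 0 < r $ a $ b}\<^sup>+" using irr unfolding irreducible_chain_def by auto
        then have "\<bar>x$j\<bar> = m \<and> \<alpha>$j = 0"
          by (induction rule: trancl_induct) (use i0 step in auto)
        then show ?thesis by simp
      qed
      then have "\<alpha> = 0" by (simp add: vec_eq_iff)
      with an show False by simp
    qed
  qed
  then have "\<exists>B. B ** ?M = mat 1" by (simp only: matrix_left_invertible_ker)
  then show ?thesis by (simp only: invertible_left_inverse)
qed

lemma nonneg_scale:
  fixes r :: "real^'n^'n"
  assumes uniq: "\<forall>p. stationary_dist r p \<longrightarrow> p = \<eta>"
    and nn: "\<And>j. 0 \<le> v$j" and inv: "v v* r = v"
  shows "v = (\<Sum>j\<in>UNIV. v$j) *s \<eta>"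
proof (cases "(\<Sum>j\<in>UNIV. v$j) = 0")
  case True
  then have "\<forall>j\<in>UNIV. v$j = 0" using sum_nonneg_eq_0_iff[of UNIV "\<lambda>j. v$j"] nn by simp
  then show ?thesis using True by (simp add: vec_eq_iff)
next
  case False
  define s where "s = (\<Sum>j\<in>UNIV. v$j)"
  have sp: "0 < s" using False nn unfolding s_def by (simp add: sum_nonneg order_le_neq_trans)
  have "stationary_dist r ((1/s) *s v)"
    unfolding stationary_dist_def prob_vector_def
  proof (intro conjI allI)
    show "0 \<le> ((1/s) *s v) $ j" for j using nn[of j] sp by simp
    show "(\<Sum>j\<in>UNIV. ((1/s) *s v) $ j) = 1"
      using sp by (simp add: sum_divide_distrib[symmetric] s_def[symmetric])
    show "((1/s) *s v) v* r = (1/s) *s v" by (simp add: scalar_vector_matrix_assoc inv)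
  qed
  then have "(1/s) *s v = \<eta>" using uniq by blast
  have "v = s *s \<eta>"
    unfolding vec_eq_iff
  proof
    fix j
    have "\<eta>$j = v$j / s" using \<open>(1/s) *s v = \<eta>\<close>[symmetric] by simp
    then show "v$j = (s *s \<eta>)$j" using sp by simp
  qed
  then show ?thesis by (simp add: s_def)
qed

lemma inv_scale:
  fixes r :: "real^'n^'n"
  assumes st: "stochastic_matrix r"
    and uniq: "\<forall>p. stationary_dist r p \<longrightarrow> p = \<eta>"
    and inv: "q v* r = q"
  shows "\<exists>t. q = t *s \<eta>"
proof -
  have rnn: "\<And>i j. 0 \<le> r$i$j" and rs: "\<And>i. (\<Sum>j\<in>UNIV. r$i$j) = 1"
    using st unfolding stochastic_matrix_def by auto
  define a where "a = (\<chi> j. \<bar>q$j\<bar>)"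
  have le: "a$j \<le> (a v* r)$j" for j
  proof -
    have "a$j = \<bar>\<Sum>i\<in>UNIV. q$i * r$i$j\<bar>" using vm_comp[of q r j] inv a_def by simp
    also have "\<dots> \<le> (\<Sum>i\<in>UNIV. \<bar>q$i * r$i$j\<bar>)" by (rule sum_abs)
    also have "\<dots> = (a v* r)$j" using rnn by (simp add: vm_comp a_def abs_mult)
    finally show ?thesis .
  qed
  have "(\<Sum>j\<in>UNIV. (a v* r)$j) = (\<Sum>i\<in>UNIV. \<Sum>j\<in>UNIV. a$i * r$i$j)"
    unfolding vm_comp by (rule sum.swap)
  also have "\<dots> = (\<Sum>i\<in>UNIV. a$i)" by (simp add: sum_distrib_left[symmetric] rs)
  finally have seq: "(\<Sum>j\<in>UNIV. (a v* r)$j - a$j) = 0" by (simp add: sum_subtractf)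
  then have "\<forall>j\<in>UNIV. (a v* r)$j - a$j = 0"
    using sum_nonneg_eq_0_iff[of UNIV "\<lambda>j. (a v* r)$j - a$j"] le by simp
  then have ainv: "a v* r = a" by (simp add: vec_eq_iff)
  have ann: "\<And>j. 0 \<le> a$j" by (simp add: a_def)
  have a_eq: "a = (\<Sum>j\<in>UNIV. a$j) *s \<eta>" by (rule nonneg_scale[OF uniq ann ainv])
  have bnn: "\<And>j. 0 \<le> (q + a)$j" by (simp add: a_def)
  have binv: "(q + a) v* r = q + a" by (simp add: vector_matrix_left_distrib inv ainv)
  have b_eq: "q + a = (\<Sum>j\<in>UNIV. (q + a)$j) *s \<eta>" by (rule nonneg_scale[OF uniq bnn binv])
  obtain sa sb where sa: "a = sa *s \<eta>" and sb: "q + a = sb *s \<eta>" using a_eq b_eq by blast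
  have "q = (sb - sa) *s \<eta>"
    unfolding vec_eq_iff
  proof
    fix j
    have "(q + a)$j = sb * \<eta>$j" "a$j = sa * \<eta>$j" using sa sb by simp_all
    then show "q$j = ((sb - sa) *s \<eta>)$j" by (simp add: algebra_simps)
  qed
  then show ?thesis by blast
qed


theorem theorem2p6:
  fixes r :: "real^'n^'n" and \<eta> :: "real^'n" and \<alpha> :: "real^'n"
  assumes "stochastic_matrix r"
    and "irreducible_chain r"
    and "stationary_dist r \<eta>"
    and "\<forall>p. stationary_dist r p \<longrightarrow> p = \<eta>"
    and "\<forall>j. 0 \<le> \<alpha> $ j \<and> \<alpha> $ j \<le> 1"
    and "\<alpha> \<noteq> 0"
  shows "invertible (mat 1 - r ** diag_mat (\<chi> j. 1 - \<alpha> $ j))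
    \<and> stationary_dist (skip_matrix r \<alpha>)
        ((1 / (\<Sum>j\<in>UNIV. \<eta> $ j * \<alpha> $ j)) *s (\<chi> j. \<eta> $ j * \<alpha> $ j))
    \<and> (\<forall>p. stationary_dist (skip_matrix r \<alpha>) p \<longrightarrow>
          p = (1 / (\<Sum>j\<in>UNIV. \<eta> $ j * \<alpha> $ j)) *s (\<chi> j. \<eta> $ j * \<alpha> $ j))
    \<and> {j. ((1 / (\<Sum>j\<in>UNIV. \<eta> $ j * \<alpha> $ j)) *s (\<chi> j. \<eta> $ j * \<alpha> $ j)) $ j \<noteq> 0}
        = UNIV - {j. \<alpha> $ j = 0}"
proof -
  note st = assms(1) and irr = assms(2) and sd = assms(3) and uniq = assms(4)
    and a01 = assms(5) and an = assms(6)
  define D where "D = diag_mat (\<chi> j. 1 - \<alpha> $ j)"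
  define M where "M = mat 1 - r ** D"
  define N where "N = matrix_inv M"
  define dA where "dA = diag_mat \<alpha>"
  define e where "e = (\<chi> j. \<eta> $ j * \<alpha> $ j)"
  define C where "C = (\<Sum>j\<in>UNIV. \<eta> $ j * \<alpha> $ j)"
  have Minv: "invertible M" unfolding M_def D_def by (rule M_inv[OF st irr a01 an])
  have MN: "M ** N = mat 1 \<and> N ** M = mat 1"
    unfolding N_def matrix_inv_def by (rule someI_ex) (use Minv in \<open>simp add: invertible_def\<close>)
  have etapos: "\<And>j. 0 < \<eta> $ j" by (rule eta_pos[OF st irr sd])
  have etainv: "\<eta> v* r = \<eta>" using sd unfolding stationary_dist_def by simp
  have skip: "x v* skip_matrix r \<alpha> = ((x v* N) v* r) v* dA" for x
    unfolding skip_matrix_def N_def M_def D_def dA_def by (simp add: vector_matrix_mul_assoc)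
  have xM: "x v* M = x - (x v* r) v* D" for x
    unfolding M_def by (simp add: vector_matrix_mult_diff_rdistrib vector_matrix_mul_assoc)
  have etaM: "\<eta> v* M = e"
    unfolding vec_eq_iff
  proof
    fix j show "(\<eta> v* M) $ j = e $ j"
      unfolding xM etainv e_def D_def by (simp add: vd_comp algebra_simps)
  qed
  have eN: "e v* N = \<eta>"
    using MN by (simp add: etaM[symmetric] vector_matrix_mul_assoc)
  have eskip: "e v* skip_matrix r \<alpha> = e"
    unfolding skip eN etainv by (simp add: vec_eq_iff dA_def e_def vd_comp)
  obtain j0 where "\<alpha> $ j0 \<noteq> 0" using an by (auto simp: vec_eq_iff)
  then have "0 < \<alpha> $ j0" using a01 by (metis order_le_neq_trans)
  then have "0 < \<eta> $ j0 * \<alpha> $ j0" using etapos by simp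
  also have "\<eta> $ j0 * \<alpha> $ j0 \<le> C" unfolding C_def
    by (rule member_le_sum) (use etapos a01 in \<open>auto intro: mult_nonneg_nonneg less_imp_le\<close>)
  finally have Cpos: "0 < C" .
  have stat: "stationary_dist (skip_matrix r \<alpha>) ((1 / C) *s e)"
    unfolding stationary_dist_def prob_vector_def
  proof (intro conjI allI)
    show "0 \<le> ((1/C) *s e) $ j" for j using Cpos etapos[of j] a01 by (simp add: e_def less_imp_le)
    show "(\<Sum>j\<in>UNIV. ((1/C) *s e) $ j) = 1"
      using Cpos by (simp add: e_def sum_divide_distrib[symmetric] C_def[symmetric])
    show "((1/C) *s e) v* skip_matrix r \<alpha> = (1/C) *s e"
      by (simp add: scalar_vector_matrix_assoc eskip)
  qed
  have un: "p = (1/C) *s e" if sp: "stationary_dist (skip_matrix r \<alpha>) p" for p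
  proof -
    have pinv: "p v* skip_matrix r \<alpha> = p" and ps: "(\<Sum>j\<in>UNIV. p $ j) = 1"
      using sp unfolding stationary_dist_def prob_vector_def by auto
    define q where "q = p v* N"
    have qM: "q v* M = p" unfolding q_def using MN by (simp add: vector_matrix_mul_assoc)
    have pq: "p = (q v* r) v* dA" using pinv unfolding skip q_def by simp
    have "q v* r = q"
      unfolding vec_eq_iff
    proof
      fix j
      have "(q v* M) $ j = p $ j" using qM by simp
      then have "q$j - (q v* r)$j * (1 - \<alpha>$j) = (q v* r)$j * \<alpha>$j"
        using pq unfolding xM D_def dA_def by (simp add: vd_comp)
      then show "(q v* r)$j = q$j" by (simp add: algebra_simps)
    qed
    then obtain t where t: "q = t *s \<eta>" using inv_scale[OF st uniq] by blast
    have pe: "p = t *s e"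
      unfolding vec_eq_iff
    proof
      fix j show "p $ j = (t *s e) $ j"
        using pq unfolding t dA_def e_def by (simp add: scalar_vector_matrix_assoc etainv vd_comp)
    qed
    have "1 = t * C" using ps unfolding pe e_def C_def by (simp add: sum_distrib_left)
    then have "t = 1 / C" using Cpos by (simp add: field_simps)
    then show ?thesis using pe by simp
  qed
  have supp: "{j. ((1/C) *s e) $ j \<noteq> 0} = UNIV - {j. \<alpha> $ j = 0}"
    using Cpos etapos by (auto simp: e_def less_imp_neq[symmetric])
  show ?thesis
    using Minv stat un supp unfolding M_def D_def C_def e_def by blast
qed

end
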